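(* Let $k$ be a field, $A$ a $k$-algebra, $a_1,\ldots,a_m\in A$ and $d\ge1$. If $P_{\ge0}(a_1,\ldots,a_m)\subseteq P_{\le d-1}(a_1,\ldots,a_m)$, then every element of $ka_1+\cdots+ka_m$ is algebraic over $k$ of degree at most $M_{d,m}=\binom{d+m-1}{m}$.
   Context: Algebras are associative with unit. For nonnegative integers $i_1,\ldots,i_m$, $p_{i_1,\ldots,i_m}(x_1,\ldots,x_m)$ is the sum of all distinct noncommutative monomials with exactly $i_j$ occurrences of $x_j$ for each $j$ ($p_{0,\ldots,0}=1$); $p_{i_1,\ldots,i_m}(a_1,\ldots,a_m)$ is its evaluation at $x_j=a_j$. $P_n(a_1,\ldots,a_m)=\operatorname{span}_k\{p_{i_1,\ldots,i_m}(a_1,\ldots,a_m)\mid i_1+\cdots+i_m=n\}$, $P_{\le r}(a_1,\ldots,a_m)=\sum_{n=0}^rP_n(a_1,\ldots,a_m)$, $P_{\ge r}(a_1,\ldots,a_m)=\sum_{n=r}^\infty P_n(a_1,\ldots,a_m)$. Algebraic of degree at most $D$ means a root of a nonzero polynomial in $k[t]$ of degree at most $D$. *)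

theory Defs
  imports "HOL-Computational_Algebra.Polynomial"
begin

text \<open>A k-algebra (associative, unital) is modelled as a ring A (type class ring_1)
  together with a unital ring homomorphism phi from the field k into the centre of A;
  scalar multiplication is c . x = phi c * x.\<close>

definition k_algebra_hom :: "('k::field \<Rightarrow> 'a::ring_1) \<Rightarrow> bool" where
  "k_algebra_hom phi \<longleftrightarrow>
     phi 1 = 1 \<and>
     (\<forall>x y. phi (x + y) = phi x + phi y) \<and>
     (\<forall>x y. phi (x * y) = phi x * phi y) \<and>
     (\<forall>c y. phi c * y = y * phi c)"

definition kspan :: "('k::field \<Rightarrow> 'a::ring_1) \<Rightarrow> 'a set \<Rightarrow> 'a set" where
  "kspan phi S = {x. \<exists>F c. finite F \<and> F \<subseteq> S \<and> x = (\<Sum>y\<in>F. phi (c y) * y)}"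

text \<open>Noncommutative monomials in x_0,...,x_(m-1) are words (lists) over {..<m};
  p_i(a) is the sum over all words with exactly i j occurrences of letter j (j < m)
  of the evaluated products.\<close>
definition words :: "nat \<Rightarrow> (nat \<Rightarrow> nat) \<Rightarrow> nat list set" where
  "words m i = {w. set w \<subseteq> {..<m} \<and> (\<forall>j<m. count_list w j = i j)}"

definition pp :: "nat \<Rightarrow> (nat \<Rightarrow> nat) \<Rightarrow> (nat \<Rightarrow> 'a::ring_1) \<Rightarrow> 'a" where
  "pp m i a = (\<Sum>w\<in>words m i. prod_list (map a w))"

definition Pn :: "('k::field \<Rightarrow> 'a::ring_1) \<Rightarrow> nat \<Rightarrow> (nat \<Rightarrow> 'a) \<Rightarrow> nat \<Rightarrow> 'a set" where
  "Pn phi m a n = kspan phi {pp m i a | i. (\<Sum>j<m. i j) = n}"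

definition Ple :: "('k::field \<Rightarrow> 'a::ring_1) \<Rightarrow> nat \<Rightarrow> (nat \<Rightarrow> 'a) \<Rightarrow> nat \<Rightarrow> 'a set" where
  "Ple phi m a r = kspan phi (\<Union>n\<in>{..r}. Pn phi m a n)"

definition Pge :: "('k::field \<Rightarrow> 'a::ring_1) \<Rightarrow> nat \<Rightarrow> (nat \<Rightarrow> 'a) \<Rightarrow> nat \<Rightarrow> 'a set" where
  "Pge phi m a r = kspan phi (\<Union>n\<in>{r..}. Pn phi m a n)"

definition aeval :: "('k::field \<Rightarrow> 'a::ring_1) \<Rightarrow> 'k poly \<Rightarrow> 'a \<Rightarrow> 'a" where
  "aeval phi q x = (\<Sum>n\<le>degree q. phi (coeff q n) * x ^ n)"

definition algebraic_deg_le :: "('k::field \<Rightarrow> 'a::ring_1) \<Rightarrow> nat \<Rightarrow> 'a \<Rightarrow> bool" where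
  "algebraic_deg_le phi D x \<longleftrightarrow> (\<exists>q. q \<noteq> 0 \<and> degree q \<le> D \<and> aeval phi q x = 0)"

end

theory Submission
  imports Defs
begin

lemma expand:
  fixes y :: "nat \<Rightarrow> 'a::ring_1"
  shows "(\<Sum>j<m. y j)^n = (\<Sum>w\<in>{w. set w \<subseteq> {..<m} \<and> length w = n}. prod_list (map y w))"
proof (induction n)
  case 0
  have "{w. set w \<subseteq> {..<m} \<and> length w = 0} = {[]}" by auto
  then show ?case by simp
next
  case (Suc n)
  define W where "W n = {w. set w \<subseteq> {..<m} \<and> length w = n}" for n
  have fin: "finite (W n)" unfolding W_def by (rule finite_lists_length_eq) simp
  have img: "W (Suc n) = (\<lambda>(j,w). j#w) ` ({..<m} \<times> W n)"
  proof
    show "W (Suc n) \<subseteq> (\<lambda>(j,w). j#w) ` ({..<m} \<times> W n)"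
    proof
      fix w assume "w \<in> W (Suc n)"
      then obtain j v where "w = j # v" "j < m" "v \<in> W n"
        unfolding W_def by (cases w) auto
      then show "w \<in> (\<lambda>(j,w). j#w) ` ({..<m} \<times> W n)" by force
    qed
  qed (auto simp: W_def)
  have inj: "inj_on (\<lambda>(j,w). j#w) ({..<m} \<times> W n)" by (auto simp: inj_on_def)
  have "(\<Sum>j<m. y j)^Suc n = (\<Sum>j<m. y j) * (\<Sum>w\<in>W n. prod_list (map y w))"
    using Suc by (simp add: W_def)
  also have "\<dots> = (\<Sum>j<m. \<Sum>w\<in>W n. y j * prod_list (map y w))" by (rule sum_product)
  also have "\<dots> = (\<Sum>p\<in>{..<m} \<times> W n. prod_list (map y ((\<lambda>(j,w). j#w) p)))"
    by (subst sum.cartesian_product) (simp add: case_prod_beta)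
  also have "\<dots> = (\<Sum>w\<in>W (Suc n). prod_list (map y w))"
    unfolding img by (rule sum.reindex[OF inj, symmetric, unfolded comp_def])
  finally show ?case by (simp add: W_def)
qed

lemma count_sum: "set (w::nat list) \<subseteq> {..<m} \<Longrightarrow> (\<Sum>j<m. count_list w j) = length w"
proof (induction w)
  case Nil then show ?case by simp
next
  case (Cons x w)
  have "(\<Sum>j<m. count_list (x#w) j) = (\<Sum>j<m. (if x = j then 1 else 0) + count_list w j)"
    by (rule sum.cong) auto
  also have "\<dots> = (\<Sum>j<m. (if x = j then 1 else 0)) + (\<Sum>j<m. count_list w j)"
    by (simp add: sum.distrib)
  also have "(\<Sum>j<m. (if x = j then 1 else 0)) = (1::nat)"
    using Cons.prems by (subst sum.delta') (simp_all add: finite_lessThan)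
  finally show ?case using Cons by simp
qed

lemma prod_count: fixes c :: "nat \<Rightarrow> 'k::comm_monoid_mult"
  shows "set w \<subseteq> {..<m} \<Longrightarrow> prod_list (map c w) = (\<Prod>j<m. c j ^ count_list w j)"
proof (induction w)
  case Nil then show ?case by simp
next
  case (Cons x w)
  have "(\<Prod>j<m. c j ^ count_list (x#w) j) = (\<Prod>j<m. (if x = j then c j else 1) * c j ^ count_list w j)"
    by (rule prod.cong) auto
  also have "\<dots> = c x * (\<Prod>j<m. c j ^ count_list w j)"
    using Cons.prems by (simp add: prod.distrib prod.delta)
  finally show ?case using Cons by simp
qed

lemma words_cong: "(\<And>j. j < m \<Longrightarrow> i j = i' j) \<Longrightarrow> words m i = words m i'"
  unfolding words_def by auto

locale kalg =
  fixes phi :: "'k::field \<Rightarrow> 'a::ring_1"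
  assumes hom: "k_algebra_hom phi"
begin

lemma phi_1: "phi 1 = 1" and phi_add: "phi (x + y) = phi x + phi y"
  and phi_mult: "phi (x * y) = phi x * phi y" and phi_central: "phi c * z = z * phi c"
  using hom unfolding k_algebra_hom_def by blast+

lemma phi_0: "phi 0 = 0"
  using phi_add[of 0 0] by simp

sublocale vs: vector_space "\<lambda>c x. phi c * x"
  by unfold_locales (simp_all add: distrib_left distrib_right phi_add phi_mult phi_1 mult.assoc)

lemma kspan_eq: "kspan phi S = vs.span S"
  unfolding kspan_def vs.span_explicit by blast

lemma prod_central: "prod_list (map (\<lambda>j. phi (c j) * a j) w) = phi (prod_list (map c w)) * prod_list (map a w)"
proof (induction w)
  case Nil then show ?case by (simp add: phi_1)
next
  case (Cons x w)
  have "phi (c x) * a x * (phi (prod_list (map c w)) * prod_list (map a w))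
      = phi (c x) * (a x * phi (prod_list (map c w))) * prod_list (map a w)"
    by (simp add: mult.assoc)
  also have "\<dots> = phi (c x) * phi (prod_list (map c w)) * (a x * prod_list (map a w))"
    by (metis mult.assoc phi_central)
  finally show ?case using Cons by (simp add: phi_mult)
qed

lemma power_in_Pn:
  fixes c :: "nat \<Rightarrow> 'k" and a :: "nat \<Rightarrow> 'a"
  shows "(\<Sum>j<m. phi (c j) * a j) ^ n \<in> Pn phi m a n"
proof -
  define W where "W = {w::nat list. set w \<subseteq> {..<m} \<and> length w = n}"
  define cnt where "cnt w = (\<lambda>j. count_list w j)" for w :: "nat list"
  define g where "g i = (\<Prod>j<m. c j ^ i j)" for i
  have fin: "finite W" unfolding W_def by (rule finite_lists_length_eq) simp
  have "(\<Sum>j<m. phi (c j) * a j) ^ n = (\<Sum>w\<in>W. prod_list (map (\<lambda>j. phi (c j) * a j) w))"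
    unfolding W_def by (rule expand)
  also have "\<dots> = (\<Sum>w\<in>W. phi (g (cnt w)) * prod_list (map a w))"
    by (rule sum.cong) (auto simp: prod_central W_def g_def cnt_def prod_count)
  also have "\<dots> = (\<Sum>i\<in>cnt ` W. \<Sum>w\<in>{w. w \<in> W \<and> cnt w = i}. phi (g (cnt w)) * prod_list (map a w))"
    by (rule sum.image_gen[OF fin])
  also have "\<dots> = (\<Sum>i\<in>cnt ` W. phi (g i) * pp m i a)"
  proof (rule sum.cong[OF refl])
    fix i assume "i \<in> cnt ` W"
    then obtain w0 where w0: "w0 \<in> W" "i = cnt w0" by auto
    have eq: "{w. w \<in> W \<and> cnt w = i} = words m i"
    proof
      show "{w. w \<in> W \<and> cnt w = i} \<subseteq> words m i"
        using w0 by (auto simp: W_def words_def cnt_def)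
      show "words m i \<subseteq> {w. w \<in> W \<and> cnt w = i}"
      proof
        fix w assume w: "w \<in> words m i"
        then have sw: "set w \<subseteq> {..<m}" and cw: "\<And>j. j < m \<Longrightarrow> count_list w j = count_list w0 j"
          using w0 by (auto simp: words_def cnt_def)
        have "length w = (\<Sum>j<m. count_list w j)" using count_sum[OF sw] by simp
        also have "\<dots> = (\<Sum>j<m. count_list w0 j)" using cw by simp
        also have "\<dots> = n" using count_sum[of w0 m] w0 by (simp add: W_def)
        finally have lw: "length w = n" .
        have "cnt w = cnt w0"
        proof
          fix j show "cnt w j = cnt w0 j"
          proof (cases "j < m")
            case True then show ?thesis using cw by (simp add: cnt_def)
          next
            case False
            then have "j \<notin> set w" "j \<notin> set w0" using sw w0 by (auto simp: W_def)
            then show ?thesis by (simp add: cnt_def count_list_0_iff)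
          qed
        qed
        then show "w \<in> {w. w \<in> W \<and> cnt w = i}" using sw lw w0 by (simp add: W_def)
      qed
    qed
    show "(\<Sum>w\<in>{w. w \<in> W \<and> cnt w = i}. phi (g (cnt w)) * prod_list (map a w)) = phi (g i) * pp m i a"
    proof -
      have "(\<Sum>w\<in>{w. w \<in> W \<and> cnt w = i}. phi (g (cnt w)) * prod_list (map a w))
          = (\<Sum>w\<in>{w. w \<in> W \<and> cnt w = i}. phi (g i) * prod_list (map a w))"
        by (rule sum.cong) auto
      then show ?thesis unfolding eq pp_def by (simp add: sum_distrib_left)
    qed
  qed
  also have "\<dots> \<in> Pn phi m a n"
    unfolding Pn_def kspan_eq
  proof (rule vs.span_sum, rule vs.span_scale, rule vs.span_base)
    fix i assume "i \<in> cnt ` W"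
    then obtain w0 where w0: "w0 \<in> W" "i = cnt w0" by auto
    then have "(\<Sum>j<m. i j) = n" using count_sum[of w0 m] by (simp add: W_def cnt_def)
    then show "pp m i a \<in> {pp m i a |i. (\<Sum>j<m. i j) = n}" by blast
  qed
  finally show ?thesis .
qed


lemma phi_minus: "phi (- c) = - phi c"
proof -
  have "phi c + phi (- c) = 0" using phi_add[of c "- c"] phi_0 by simp
  then show ?thesis by (rule minus_unique[symmetric])
qed

lemma span_rep:
  fixes a :: "nat \<Rightarrow> 'a"
  assumes "x \<in> kspan phi (a ` {..<m})"
  shows "\<exists>c. x = (\<Sum>j<m. phi (c j) * a j)"
proof -
  let ?S = "a ` {..<m}"
  have "x \<in> vs.span ?S" using assms kspan_eq by simp
  then have "x \<in> range (\<lambda>u. \<Sum>v\<in>?S. phi (u v) * v)"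
    by (subst (asm) vs.span_finite) auto
  then obtain u where u: "x = (\<Sum>v\<in>?S. phi (u v) * v)" by blast
  define r where "r v = (SOME j. j < m \<and> a j = v)" for v
  have r: "r v < m \<and> a (r v) = v" if "v \<in> ?S" for v
    proof -
    from that obtain j where "j < m" "a j = v" by auto
    then show ?thesis unfolding r_def by (rule someI[where P="\<lambda>j. j < m \<and> a j = v", OF conjI])
  qed
  define c where "c j = (if r (a j) = j then u (a j) else 0)" for j
  have "(\<Sum>j<m. phi (c j) * a j) = (\<Sum>v\<in>?S. \<Sum>j\<in>{j. j \<in> {..<m} \<and> a j = v}. phi (c j) * a j)"
    by (rule sum.image_gen) simp
  also have "\<dots> = (\<Sum>v\<in>?S. phi (u v) * v)"
  proof (rule sum.cong[OF refl])
    fix v assume v: "v \<in> ?S"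
    have "(\<Sum>j\<in>{j. j \<in> {..<m} \<and> a j = v}. phi (c j) * a j)
        = (\<Sum>j\<in>{j. j \<in> {..<m} \<and> a j = v}. if r v = j then phi (u v) * v else 0)"
      by (rule sum.cong) (auto simp: c_def phi_0)
    also have "\<dots> = phi (u v) * v"
      using r[OF v] by (subst sum.delta') auto
    finally show "(\<Sum>j\<in>{j. j \<in> {..<m} \<and> a j = v}. phi (c j) * a j) = phi (u v) * v" .
  qed
  finally show ?thesis using u by metis
qed

lemma Ple_sub:
  "Ple phi m a r \<subseteq> vs.span ((\<lambda>l. pp m (\<lambda>j. if j < m then l ! j else 0) a) ` {l. length l = m + 1 \<and> sum_list l = r})"
  (is "_ \<subseteq> vs.span ?B")
proof -
  have "Pn phi m a n \<subseteq> vs.span ?B" if n: "n \<le> r" for n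
    unfolding Pn_def kspan_eq
  proof (rule vs.span_mono, rule subsetI)
    fix y assume "y \<in> {pp m i a |i. (\<Sum>j<m. i j) = n}"
    then obtain i where y: "y = pp m i a" and si: "(\<Sum>j<m. i j) = n" by blast
    define l where "l = map i [0..<m] @ [r - n]"
    have sl: "sum_list (map i [0..<m]) = n"
      using si by (simp add: sum_list_map_eq_sum_count2 sum_set_upt_conv_sum_list_nat[symmetric] lessThan_atLeast0)
    have "l \<in> {l. length l = m + 1 \<and> sum_list l = r}"
      using sl n by (simp add: l_def)
    moreover have "y = pp m (\<lambda>j. if j < m then l ! j else 0) a"
    proof -
      have "words m i = words m (\<lambda>j. if j < m then l ! j else 0)"
        by (rule words_cong) (simp add: l_def nth_append)
      then show ?thesis unfolding y pp_def by simp
    qed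
    ultimately show "y \<in> ?B" by blast
  qed
  then have "(\<Union>n\<in>{..r}. Pn phi m a n) \<subseteq> vs.span ?B" by blast
  then have "vs.span (\<Union>n\<in>{..r}. Pn phi m a n) \<subseteq> vs.span (vs.span ?B)" by (rule vs.span_mono)
  then show ?thesis unfolding Ple_def kspan_eq vs.span_span .
qed

lemma card_B:
  "finite {l. length l = m + 1 \<and> sum_list l = (r::nat)} \<and> card {l. length l = m + 1 \<and> sum_list l = r} = (r + m) choose m"
proof -
  have c: "card {l::nat list. length l = m + 1 \<and> sum_list l = r} = (r + (m+1) - 1) choose r"
    by (rule card_length_sum_list)
  also have "\<dots> = (r + m) choose m"
    using binomial_symmetric[of r "r + m"] by simp
  finally have c2: "card {l::nat list. length l = m + 1 \<and> sum_list l = r} = (r + m) choose m" .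
  have "0 < (r + m) choose m" by (simp add: zero_less_binomial)
  then have "finite {l::nat list. length l = m + 1 \<and> sum_list l = r}"
    using c2 card_gt_0_iff by metis
  then show ?thesis using c2 by blast
qed

end

theorem corollary3p6:
  fixes phi :: "'k::field \<Rightarrow> 'a::ring_1"
    and a :: "nat \<Rightarrow> 'a" and m d :: nat
  assumes "k_algebra_hom phi"
    and "d \<ge> 1"
    and "Pge phi m a 0 \<subseteq> Ple phi m a (d - 1)"
  shows "\<forall>x \<in> kspan phi (a ` {..<m}). algebraic_deg_le phi ((d + m - 1) choose m) x"
proof (rule ballI)
  fix x assume x: "x \<in> kspan phi (a ` {..<m})"
  interpret kalg phi by (rule kalg.intro) (rule assms(1))
  obtain c where xc: "x = (\<Sum>j<m. phi (c j) * a j)" using span_rep[OF x] by blast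
  define N where "N = (d + m - 1) choose m"
  define L where "L = {l. length l = m + 1 \<and> sum_list l = d - 1}"
  define B where "B = (\<lambda>l. pp m (\<lambda>j. if j < m then l ! j else 0) a) ` L"
  have "d - 1 + m = d + m - 1" using assms(2) by simp
  then have finL: "finite L" and cardL: "card L = N"
    using card_B[of m "d - 1"] by (simp_all add: L_def N_def)
  have finB: "finite B" and cardB: "card B \<le> N"
    using finL cardL card_image_le[OF finL] by (auto simp: B_def)
  have pw: "x ^ k \<in> vs.span B" for k
  proof -
    have "x ^ k \<in> Pn phi m a k" unfolding xc by (rule power_in_Pn)
    moreover have "Pn phi m a k \<subseteq> Pge phi m a 0"
    proof -
      have "Pn phi m a k \<subseteq> (\<Union>n\<in>{0..}. Pn phi m a n)" by auto
      then show ?thesis unfolding Pge_def kspan_eq using vs.span_superset by blast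
    qed
    moreover have "Ple phi m a (d - 1) \<subseteq> vs.span B" unfolding B_def L_def by (rule Ple_sub)
    ultimately show ?thesis using assms(3) by blast
  qed
  have ex: "\<exists>u. (\<exists>k\<le>N. u k \<noteq> 0) \<and> (\<Sum>k\<le>N. phi (u k) * x ^ k) = 0"
  proof (cases "inj_on (\<lambda>k. x ^ k) {..N}")
    case True
    define S where "S = (\<lambda>k. x ^ k) ` {..N}"
    have cS: "card S = N + 1" using True by (simp add: S_def card_image)
    have finS: "finite S" by (simp add: S_def)
    have "vs.dependent S"
    proof (rule ccontr)
      assume "\<not> vs.dependent S"
      then have "card S \<le> card B" using vs.independent_span_bound[OF finB] pw by (auto simp: S_def)
      then show False using cS cardB by simp
    qed
    then obtain u' where u': "\<exists>v\<in>S. u' v \<noteq> 0" "(\<Sum>v\<in>S. phi (u' v) * v) = 0"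
      using vs.dependent_finite[OF finS] by auto
    show ?thesis
    proof (rule exI[of _ "\<lambda>k. u' (x ^ k)"], intro conjI)
      show "\<exists>k\<le>N. u' (x ^ k) \<noteq> 0" using u'(1) by (auto simp: S_def)
      show "(\<Sum>k\<le>N. phi (u' (x ^ k)) * x ^ k) = 0"
        using u'(2) sum.reindex[OF True, of "\<lambda>v. phi (u' v) * v"] by (simp add: S_def)
    qed
  next
    case False
    then obtain i j where ij: "i \<le> N" "j \<le> N" "i \<noteq> j" "x ^ i = x ^ j"
      by (auto simp: inj_on_def)
    define u where "u k = (if k = i then 1 else if k = j then -1 else (0::'k))" for k :: nat
    show ?thesis
    proof (rule exI[of _ u], intro conjI)
      show "\<exists>k\<le>N. u k \<noteq> 0" using ij by (auto simp: u_def)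
      have "(\<Sum>k\<le>N. phi (u k) * x ^ k) = (\<Sum>k\<le>N. (if k = i then x ^ i else 0) + (if k = j then (- (x ^ j)) else 0))"
        by (rule sum.cong) (use ij in \<open>auto simp: u_def phi_1 phi_minus phi_0\<close>)
      also have "\<dots> = x ^ i - x ^ j" using ij by (simp add: sum.distrib sum.delta)
      finally show "(\<Sum>k\<le>N. phi (u k) * x ^ k) = 0" using ij by simp
    qed
  qed
  then obtain u where u: "\<exists>k\<le>N. u k \<noteq> 0" "(\<Sum>k\<le>N. phi (u k) * x ^ k) = 0" by blast
  define q where "q = (\<Sum>k\<le>N. monom (u k) k)"
  have cq: "coeff q n = (if n \<le> N then u n else 0)" for n
    by (simp add: q_def coeff_sum sum.delta)
  have q0: "q \<noteq> 0" using u(1) cq by (metis coeff_0)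
  have dq: "degree q \<le> N" by (rule degree_le) (simp add: cq)
  have "aeval phi q x = (\<Sum>n\<le>N. phi (coeff q n) * x ^ n)"
    unfolding aeval_def by (rule sum.mono_neutral_left) (auto simp: dq coeff_eq_0 phi_0)
  also have "\<dots> = 0" using u(2) by (simp add: cq)
  finally show "algebraic_deg_le phi ((d + m - 1) choose m) x"
    unfolding algebraic_deg_le_def N_def[symmetric] using q0 dq by blast
qed

end
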